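(* Let $n\ge 5$ and $M\ge 1$ be integers and $U=\{0,1,\ldots,M-1\}$. Suppose there is a $2$-coloring $\phi:\binom{U}{2}\to\{\text{red},\text{blue}\}$ such that every $n$-element subset of $U$ contains three elements $x<y<z$ with $\phi(x,y)=\phi(y,z)\ne\phi(x,z)$. Then \[ r_4(5,\,2^6n^5+1)\ >\ 2^{M}. \]
   Context: For integers $k<s$ and $n$, the Ramsey number $r_k(s,n)$ is the smallest integer $N$ such that every $k$-uniform hypergraph on $N$ vertices contains either a copy of the complete $k$-uniform hypergraph $K_s^{(k)}$ on $s$ vertices or an independent set of size $n$ (a set of $n$ vertices containing no edge). For distinct $x,y\in U$ we write $\phi(x,y)=\phi(y,x)$ for the color of the pair $\{x,y\}$. *)

theory Defs
  imports Main
begin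

definition uniform_hypergraph :: "nat \<Rightarrow> nat \<Rightarrow> nat set set \<Rightarrow> bool" where
  "uniform_hypergraph k N H \<longleftrightarrow> (\<forall>e\<in>H. e \<subseteq> {0..<N} \<and> card e = k)"

definition has_clique :: "nat \<Rightarrow> nat \<Rightarrow> nat \<Rightarrow> nat set set \<Rightarrow> bool" where
  "has_clique k s N H \<longleftrightarrow>
     (\<exists>S. S \<subseteq> {0..<N} \<and> card S = s \<and> {e. e \<subseteq> S \<and> card e = k} \<subseteq> H)"

definition has_indep :: "nat \<Rightarrow> nat \<Rightarrow> nat set set \<Rightarrow> bool" where
  "has_indep n N H \<longleftrightarrow> (\<exists>I. I \<subseteq> {0..<N} \<and> card I = n \<and> (\<forall>e\<in>H. \<not> e \<subseteq> I))"

definition hramsey :: "nat \<Rightarrow> nat \<Rightarrow> nat \<Rightarrow> nat" where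
  "hramsey k s n = (LEAST N. \<forall>H. uniform_hypergraph k N H \<longrightarrow> has_clique k s N H \<or> has_indep n N H)"

end

theory Submission
  imports Defs "HOL-Library.Ramsey"
begin

definition dl :: "nat \<Rightarrow> nat \<Rightarrow> nat" where
  "dl a b = (LEAST u. a div 2^(Suc u) = b div 2^(Suc u))"

lemma div_pow_eq_mono:
  assumes "a div 2^k = b div 2^k" "k \<le> j" shows "a div (2::nat)^j = b div 2^j"
proof -
  have e: "(2::nat)^j = 2^k * 2^(j-k)" using assms(2) by (simp add: power_add[symmetric])
  have "a div 2^j = (a div 2^k) div 2^(j-k)" unfolding e by (rule div_mult2_eq)
  also have "\<dots> = (b div 2^k) div 2^(j-k)" using assms(1) by simp
  also have "\<dots> = b div 2^j" unfolding e by (rule div_mult2_eq[symmetric])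
  finally show ?thesis .
qed

lemma dl_ex: "\<exists>u. a div 2^(Suc u) = b div (2::nat)^(Suc u)"
proof -
  have p: "(2::nat)^a \<le> 2^(Suc (a+b))" "(2::nat)^b \<le> 2^(Suc (a+b))"
    by (rule power_increasing; simp)+
  have "a < 2^(Suc (a+b))" using less_exp[of a] p(1) by (rule less_le_trans)
  moreover have "b < 2^(Suc (a+b))" using less_exp[of b] p(2) by (rule less_le_trans)
  ultimately show ?thesis by (intro exI[of _ "a+b"]) (simp only: div_less)
qed

lemma dl_eq_iff:
  assumes "a \<noteq> b" shows "a div 2^k = b div (2::nat)^k \<longleftrightarrow> dl a b < k"
proof
  assume h: "a div 2^k = b div 2^k"
  show "dl a b < k"
  proof (cases k)
    case 0 thus ?thesis using h assms by simp
  next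
    case (Suc j)
    have h2: "a div 2^(Suc j) = b div 2^(Suc j)" using h Suc by (simp only:)
    have "dl a b \<le> j" unfolding dl_def by (rule Least_le) (rule h2)
    thus ?thesis using Suc by simp
  qed
next
  assume "dl a b < k"
  hence le: "Suc (dl a b) \<le> k" by simp
  have eq: "a div 2^(Suc (dl a b)) = b div 2^(Suc (dl a b))"
    unfolding dl_def using dl_ex[of a b] by (rule LeastI_ex)
  show "a div 2^k = b div 2^k" by (rule div_pow_eq_mono[OF eq le])
qed

lemma dl_sym: "dl a b = dl b a"
  unfolding dl_def by (simp add: eq_commute)

lemma dl_neq: "a \<noteq> b \<Longrightarrow> a div 2^(dl a b) \<noteq> b div (2::nat)^(dl a b)"
  using dl_eq_iff by blast

lemma dl_less_div: assumes "a < b" shows "a div 2^(dl a b) < b div (2::nat)^(dl a b)"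
proof -
  have "a div 2^(dl a b) \<le> b div 2^(dl a b)" using assms by (intro div_le_mono) simp
  moreover have "a \<noteq> b" using assms by simp
  ultimately show ?thesis using dl_neq by (blast intro: order_le_neq_trans)
qed

lemma dl_closer:
  assumes "a \<noteq> b" "a \<noteq> c" "dl a b < dl a c"
  shows "dl b c = dl a c" "(a < c \<longleftrightarrow> b < c)"
proof -
  let ?u = "dl a c"
  have bc: "b \<noteq> c" using assms by auto
  have ab: "a div 2^?u = b div 2^?u" using dl_eq_iff[OF assms(1)] assms(3) by simp
  have ac: "a div 2^?u \<noteq> c div 2^?u" using dl_neq[OF assms(2)] .
  have ac1: "a div 2^Suc ?u = c div 2^Suc ?u" using dl_eq_iff[OF assms(2), of "Suc ?u"] by blast
  have ab1: "a div 2^Suc ?u = b div 2^Suc ?u" using dl_eq_iff[OF assms(1), of "Suc ?u"] assms(3) by linarith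
  have "b div 2^?u \<noteq> c div 2^?u" using ab ac by simp
  hence "\<not> dl b c < ?u" using dl_eq_iff[OF bc] by simp
  moreover have "dl b c < Suc ?u" using dl_eq_iff[OF bc, of "Suc ?u"] ab1 ac1 by metis
  ultimately show "dl b c = dl a c" by simp
  show "a < c \<longleftrightarrow> b < c"
  proof
    assume "a < c"
    hence "a div 2^?u < c div 2^?u" by (rule dl_less_div)
    hence "b div 2^?u < c div 2^?u" using ab by simp
    thus "b < c" by (metis div_le_mono not_less)
  next
    assume "b < c"
    hence "b div 2^?u \<le> c div 2^?u" by (intro div_le_mono) simp
    hence "b div 2^?u < c div 2^?u" using ab ac by (metis order_le_neq_trans)
    hence "a div 2^?u < c div 2^?u" using ab by simp
    thus "a < c" by (metis div_le_mono not_less)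
  qed
qed

lemma dl_lt_M: "a < 2^M \<Longrightarrow> b < 2^M \<Longrightarrow> a \<noteq> b \<Longrightarrow> dl a b < M"
  using dl_eq_iff[of a b M] by simp

lemma dl_three:
  assumes "x < y" "y < z"
  shows "dl x y \<noteq> dl y z" "dl x z = max (dl x y) (dl y z)"
proof -
  show ne: "dl x y \<noteq> dl y z"
  proof
    assume eq: "dl x y = dl y z"
    let ?u = "dl x y"
    have 1: "x div 2^?u < y div 2^?u" using dl_less_div[OF assms(1)] .
    have 2: "y div 2^?u < z div 2^?u" using dl_less_div[OF assms(2)] eq by simp
    have xy: "x div 2^Suc ?u = y div 2^Suc ?u" using dl_eq_iff[of x y "Suc ?u"] assms(1) by blast
    have yz: "y div 2^Suc ?u = z div 2^Suc ?u" using dl_eq_iff[of y z "Suc ?u"] assms(2) eq by auto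
    have "x div 2^Suc ?u = (x div 2^?u) div 2" "z div 2^Suc ?u = (z div 2^?u) div 2"
      by (simp_all only: power_Suc2 div_mult2_eq)
    moreover have "\<And>a b c::nat. a < b \<Longrightarrow> b < c \<Longrightarrow> a div 2 \<noteq> c div 2" by presburger
    ultimately show False using 1 2 xy yz by metis
  qed
  show "dl x z = max (dl x y) (dl y z)"
  proof (cases "dl x y < dl y z")
    case True
    have "dl y x < dl y z" using True dl_sym by metis
    hence "dl x z = dl y z" using dl_closer(1)[of y x z] assms by simp
    thus ?thesis using True by simp
  next
    case False
    hence "dl y z < dl y x" using ne dl_sym by (metis linorder_neqE_nat)
    hence "dl z x = dl y x" using dl_closer(1)[of y z x] assms by simp
    thus ?thesis using False by (simp add: dl_sym)
  qed
qed

definition Rl :: "(nat \<Rightarrow> nat \<Rightarrow> bool) \<Rightarrow> nat \<Rightarrow> nat \<Rightarrow> nat \<Rightarrow> bool" where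
  "Rl c d1 d2 d3 \<longleftrightarrow>
     (((d1 < d2 \<and> d2 < d3) \<or> (d3 < d2 \<and> d2 < d1)) \<and> c d1 d2 = c d2 d3 \<and> c d1 d3 \<noteq> c d2 d3)
   \<or> (d2 < d1 \<and> d2 < d3 \<and> d1 < d3 \<and> c d1 d2 \<noteq> c d2 d3)
   \<or> (d2 < d1 \<and> d2 < d3 \<and> d3 < d1 \<and> c d1 d2 = c d2 d3 \<and> c d1 d3 = c d2 d3)"

lemma Rl_np: "Rl c x y z \<Longrightarrow> \<not> (x < y \<and> z < y)"
  unfolding Rl_def by auto

lemma K5:
  fixes d1 d2 d3 d4 :: nat
  assumes sym: "\<And>x y. c x y = c y x"
    and "d1 \<noteq> d2" "d2 \<noteq> d3" "d3 \<noteq> d4"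
    and "max d1 d2 \<noteq> d3" "d1 \<noteq> max d2 d3" "max d2 d3 \<noteq> d4" "d2 \<noteq> max d3 d4"
    and "max d1 d2 \<noteq> max d3 d4" "d1 \<noteq> max (max d2 d3) d4" "max (max d1 d2) d3 \<noteq> d4"
  shows "\<not> (Rl c d1 d2 d3 \<and> Rl c d2 d3 d4 \<and> Rl c d1 d2 (max d3 d4) \<and> Rl c d1 (max d2 d3) d4
            \<and> Rl c (max d1 d2) d3 d4)"
proof
  assume H: "Rl c d1 d2 d3 \<and> Rl c d2 d3 d4 \<and> Rl c d1 d2 (max d3 d4) \<and> Rl c d1 (max d2 d3) d4
            \<and> Rl c (max d1 d2) d3 d4"
  have s: "c d2 d1 = c d1 d2" "c d3 d1 = c d1 d3" "c d4 d1 = c d1 d4" "c d3 d2 = c d2 d3"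
    "c d4 d2 = c d2 d4" "c d4 d3 = c d3 d4" using sym by auto
  have n1: "\<not> (d1 < d2 \<and> d3 < d2)" using H Rl_np by blast
  have n2: "\<not> (d2 < d3 \<and> d4 < d3)" using H Rl_np by blast
  consider (pppp) "d1 < d2" "d2 < d3" "d3 < d4" | (mmmm) "d2 < d1" "d3 < d2" "d4 < d3"
    | (mpp) "d2 < d1" "d2 < d3" "d3 < d4" | (mmp) "d2 < d1" "d3 < d2" "d3 < d4"
    using n1 n2 assms(2-4) by (metis linorder_neqE_nat)
  then show False
  proof cases
    case pppp thus ?thesis using H by (simp add: max_def Rl_def s) (metis s)
  next
    case mmmm thus ?thesis using H by (simp add: max_def Rl_def s) (metis s)
  next
    case mpp
    have "d1 \<noteq> d3" "d1 \<noteq> d4" using mpp assms(5,10) by (auto simp: max_def)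
    then consider "d1 < d3" | "d3 < d1" "d1 < d4" | "d4 < d1" by (metis linorder_neqE_nat)
    thus ?thesis using H mpp by cases (simp_all add: max_def Rl_def s, (metis s)+)
  next
    case mmp
    have "d2 \<noteq> d4" "d1 \<noteq> d4" using mmp assms(8,11) by (auto simp: max_def)
    then consider "d4 < d2" | "d2 < d4" "d4 < d1" | "d1 < d4" using mmp by (metis linorder_neqE_nat)
    thus ?thesis using H mmp by cases (simp_all add: max_def Rl_def s, (metis s)+)
  qed
qed

definition R3 :: "(nat \<Rightarrow> nat \<Rightarrow> bool) \<Rightarrow> bool \<Rightarrow> bool \<Rightarrow> nat \<Rightarrow> nat \<Rightarrow> nat \<Rightarrow> bool" where
  "R3 c s t u1 u2 w = (if \<not> s \<and> \<not> t then Rl c w u2 u1 else if s \<and> t then Rl c u1 u2 w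
     else if \<not> s \<and> t then Rl c u2 w u1 else Rl c u1 w u2)"

lemma Alt7F:
  fixes v0 v1 v2 v3 v4 v5 v6 :: nat
  assumes sym: "\<And>x y. c x y = c y x"
    and o: "v1 < v0" "v2 < v1" "v3 < v2" "v4 < v3" "v5 < v4" "v6 < v5"
    and h: "\<not> R3 c False True v0 v1 v2" "\<not> R3 c False True v0 v1 v3" "\<not> R3 c False True v0 v1 v4" "\<not> R3 c False True v0 v1 v5" "\<not> R3 c False True v0 v1 v6" "\<not> R3 c False False v0 v2 v3" "\<not> R3 c False False v0 v2 v4" "\<not> R3 c False False v0 v2 v5" "\<not> R3 c False False v0 v2 v6" "\<not> R3 c False True v0 v3 v4" "\<not> R3 c False True v0 v3 v5" "\<not> R3 c False True v0 v3 v6" "\<not> R3 c False False v0 v4 v5" "\<not> R3 c False False v0 v4 v6" "\<not> R3 c False True v0 v5 v6" "\<not> R3 c True False v1 v2 v3" "\<not> R3 c True False v1 v2 v4" "\<not> R3 c True False v1 v2 v5" "\<not> R3 c True False v1 v2 v6" "\<not> R3 c True True v1 v3 v4" "\<not> R3 c True True v1 v3 v5" "\<not> R3 c True True v1 v3 v6" "\<not> R3 c True False v1 v4 v5" "\<not> R3 c True False v1 v4 v6" "\<not> R3 c True True v1 v5 v6" "\<not> R3 c False True v2 v3 v4" "\<not> R3 c False True v2 v3 v5" "\<not> R3 c False True v2 v3 v6" "\<not> R3 c False False v2 v4 v5" "\<not> R3 c False False v2 v4 v6" "\<not> R3 c False True v2 v5 v6" "\<not> R3 c True False v3 v4 v5"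 "\<not> R3 c True False v3 v4 v6" "\<not> R3 c True True v3 v5 v6" "\<not> R3 c False True v4 v5 v6"
  shows False
proof -
  have s: "c v1 v0 = c v0 v1" "c v2 v0 = c v0 v2" "c v3 v0 = c v0 v3" "c v4 v0 = c v0 v4" "c v5 v0 = c v0 v5" "c v6 v0 = c v0 v6" "c v2 v1 = c v1 v2" "c v3 v1 = c v1 v3" "c v4 v1 = c v1 v4" "c v5 v1 = c v1 v5" "c v6 v1 = c v1 v6" "c v3 v2 = c v2 v3" "c v4 v2 = c v2 v4" "c v5 v2 = c v2 v5" "c v6 v2 = c v2 v6" "c v4 v3 = c v3 v4" "c v5 v3 = c v3 v5" "c v6 v3 = c v3 v6" "c v5 v4 = c v4 v5" "c v6 v4 = c v4 v6" "c v6 v5 = c v5 v6" using sym by auto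
  have oo: "v1 < v0" "v2 < v0" "v3 < v0" "v4 < v0" "v5 < v0" "v6 < v0" "v2 < v1" "v3 < v1" "v4 < v1" "v5 < v1" "v6 < v1" "v3 < v2" "v4 < v2" "v5 < v2" "v6 < v2" "v4 < v3" "v5 < v3" "v6 < v3" "v5 < v4" "v6 < v4" "v6 < v5" using o by linarith+
  show False using h oo unfolding R3_def Rl_def
    by (simp add: s; sat)
qed

lemma Alt7T:
  fixes v0 v1 v2 v3 v4 v5 v6 :: nat
  assumes sym: "\<And>x y. c x y = c y x"
    and o: "v1 < v0" "v2 < v1" "v3 < v2" "v4 < v3" "v5 < v4" "v6 < v5"
    and h: "\<not> R3 c True False v0 v1 v2" "\<not> R3 c True False v0 v1 v3" "\<not> R3 c True False v0 v1 v4" "\<not> R3 c True False v0 v1 v5" "\<not> R3 c True False v0 v1 v6" "\<not> R3 c True True v0 v2 v3" "\<not> R3 c True True v0 v2 v4" "\<not> R3 c True True v0 v2 v5" "\<not> R3 c True True v0 v2 v6" "\<not> R3 c True False v0 v3 v4" "\<not> R3 c True False v0 v3 v5" "\<not> R3 c True False v0 v3 v6" "\<not> R3 c True True v0 v4 v5" "\<not> R3 c True True v0 v4 v6" "\<not> R3 c True False v0 v5 v6" "\<not> R3 c False True v1 v2 v3" "\<not> R3 c False True v1 v2 v4" "\<not> R3 c False True v1 v2 v5" "\<not> R3 c False True v1 v2 v6" "\<not> R3 c False False v1 v3 v4" "\<not> R3 c False False v1 v3 v5" "\<not> R3 c False False v1 v3 v6" "\<not> R3 c False True v1 v4 v5"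 "\<not> R3 c False True v1 v4 v6" "\<not> R3 c False False v1 v5 v6" "\<not> R3 c True False v2 v3 v4" "\<not> R3 c True False v2 v3 v5" "\<not> R3 c True False v2 v3 v6" "\<not> R3 c True True v2 v4 v5" "\<not> R3 c True True v2 v4 v6" "\<not> R3 c True False v2 v5 v6" "\<not> R3 c False True v3 v4 v5" "\<not> R3 c False True v3 v4 v6" "\<not> R3 c False False v3 v5 v6" "\<not> R3 c True False v4 v5 v6"
  shows False
proof -
  have s: "c v1 v0 = c v0 v1" "c v2 v0 = c v0 v2" "c v3 v0 = c v0 v3" "c v4 v0 = c v0 v4" "c v5 v0 = c v0 v5" "c v6 v0 = c v0 v6" "c v2 v1 = c v1 v2" "c v3 v1 = c v1 v3" "c v4 v1 = c v1 v4" "c v5 v1 = c v1 v5" "c v6 v1 = c v1 v6" "c v3 v2 = c v2 v3" "c v4 v2 = c v2 v4" "c v5 v2 = c v2 v5" "c v6 v2 = c v2 v6" "c v4 v3 = c v3 v4" "c v5 v3 = c v3 v5" "c v6 v3 = c v3 v6" "c v5 v4 = c v4 v5" "c v6 v4 = c v4 v6" "c v6 v5 = c v5 v6" using sym by auto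
  have oo: "v1 < v0" "v2 < v0" "v3 < v0" "v4 < v0" "v5 < v0" "v6 < v0" "v2 < v1" "v3 < v1" "v4 < v1" "v5 < v1" "v6 < v1" "v3 < v2" "v4 < v2" "v5 < v2" "v6 < v2" "v4 < v3" "v5 < v3" "v6 < v3" "v5 < v4" "v6 < v4" "v6 < v5" using o by linarith+
  show False using h oo unfolding R3_def Rl_def
    by (simp add: s; sat)
qed

definition Hg :: "nat \<Rightarrow> (nat set \<Rightarrow> bool) \<Rightarrow> nat set set" where
  "Hg M \<phi> = {e. \<exists>a b c d. a < b \<and> b < c \<and> c < d \<and> d < 2^M \<and> e = {a,b,c,d} \<and>
      Rl (\<lambda>x y. \<phi> {x,y}) (dl a b) (dl b c) (dl c d)}"

lemma Hg_uniform: "uniform_hypergraph 4 (2^M) (Hg M \<phi>)"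
  unfolding uniform_hypergraph_def Hg_def by auto

lemma insert_min_eq:
  fixes x x' :: nat
  assumes "\<forall>y\<in>A. x < y" "\<forall>y\<in>A'. x' < y" "insert x A = insert x' A'"
  shows "x = x' \<and> A = A'"
proof -
  have "x' \<in> insert x A" "x \<in> insert x' A'" using assms(3) by blast+
  hence "x \<le> x'" "x' \<le> x" using assms(1,2) by force+
  hence xx: "x = x'" by simp
  have "x \<notin> A" "x \<notin> A'" using assms(1,2) xx by auto
  hence "A = A'" using assms(3) xx by (metis insert_ident)
  thus ?thesis using xx by simp
qed

lemma sorted4_eq:
  fixes a b c d a' b' c' d' :: nat
  assumes "a < b" "b < c" "c < d" "a' < b'" "b' < c'" "c' < d'" "{a,b,c,d} = {a',b',c',d'}"
  shows "a = a' \<and> b = b' \<and> c = c' \<and> d = d'"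
proof -
  have 1: "a = a' \<and> {b,c,d} = {b',c',d'}"
    by (rule insert_min_eq) (use assms in auto)
  have 2: "b = b' \<and> {c,d} = {c',d'}"
    by (rule insert_min_eq) (use assms 1 in auto)
  have 3: "c = c' \<and> {d} = {d'}"
    by (rule insert_min_eq) (use assms 2 in auto)
  show ?thesis using 1 2 3 by auto
qed

lemma in_Hg_Rl:
  assumes "{a,b,c,d} \<in> Hg M \<phi>" "a < b" "b < c" "c < d"
  shows "Rl (\<lambda>x y. \<phi> {x,y}) (dl a b) (dl b c) (dl c d)"
proof -
  obtain a' b' c' d' where h: "a' < b'" "b' < c'" "c' < d'" "{a,b,c,d} = {a',b',c',d'}"
    "Rl (\<lambda>x y. \<phi> {x,y}) (dl a' b') (dl b' c') (dl c' d')"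
    using assms(1) unfolding Hg_def by blast
  have "a = a' \<and> b = b' \<and> c = c' \<and> d = d'" using sorted4_eq[OF assms(2-4) h(1-4)] .
  thus ?thesis using h(5) by simp
qed

lemma no_clique: "\<not> has_clique 4 5 (2^M) (Hg M \<phi>)"
proof
  assume "has_clique 4 5 (2^M) (Hg M \<phi>)"
  then obtain S where S: "S \<subseteq> {0..<2^M}" "card S = 5" "{e. e \<subseteq> S \<and> card e = 4} \<subseteq> Hg M \<phi>"
    unfolding has_clique_def by blast
  have "finite S" using S(2) by (metis card.infinite zero_neq_numeral)
  hence "S \<in> nsets S 5" using S(2) by (simp add: nsets_def)
  then obtain s1 s2 s3 s4 s5 where s: "S = {s1,s2,s3,s4,s5}" "s1 < s2" "s2 < s3" "s3 < s4" "s4 < s5"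
    unfolding ordered_nsets_5_eq by blast
  let ?c = "\<lambda>x y. \<phi> {x,y}"
  have sym: "\<And>x y. ?c x y = ?c y x" by (simp add: insert_commute)
  have E: "\<And>a b c d. a < b \<Longrightarrow> b < c \<Longrightarrow> c < d \<Longrightarrow> {a,b,c,d} \<subseteq> S \<Longrightarrow> Rl ?c (dl a b) (dl b c) (dl c d)"
  proof -
    fix a b c d assume h: "a < b" "b < c" "c < (d::nat)" "{a,b,c,d} \<subseteq> S"
    have "card {a,b,c,d} = 4" using h by auto
    hence "{a,b,c,d} \<in> Hg M \<phi>" using S(3) h(4) by blast
    thus "Rl ?c (dl a b) (dl b c) (dl c d)" using in_Hg_Rl h by blast
  qed
  have r1: "Rl ?c (dl s1 s2) (dl s2 s3) (dl s3 s4)" using E s by auto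
  have r2: "Rl ?c (dl s2 s3) (dl s3 s4) (dl s4 s5)" using E s by auto
  have r3: "Rl ?c (dl s1 s2) (dl s2 s3) (dl s3 s5)" using E[of s1 s2 s3 s5] s by auto
  have r4: "Rl ?c (dl s1 s2) (dl s2 s4) (dl s4 s5)" using E[of s1 s2 s4 s5] s by auto
  have r5: "Rl ?c (dl s1 s3) (dl s3 s4) (dl s4 s5)" using E[of s1 s3 s4 s5] s by auto
  have m35: "dl s3 s5 = max (dl s3 s4) (dl s4 s5)" using dl_three s by blast
  have m24: "dl s2 s4 = max (dl s2 s3) (dl s3 s4)" using dl_three s by blast
  have m13: "dl s1 s3 = max (dl s1 s2) (dl s2 s3)" using dl_three s by blast
  have m25: "dl s2 s5 = max (dl s2 s4) (dl s4 s5)" using dl_three(2)[of s2 s4 s5] s by simp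
  have m14: "dl s1 s4 = max (dl s1 s3) (dl s3 s4)" using dl_three(2)[of s1 s3 s4] s by simp
  have n: "dl s1 s2 \<noteq> dl s2 s3" "dl s2 s3 \<noteq> dl s3 s4" "dl s3 s4 \<noteq> dl s4 s5"
    "dl s1 s3 \<noteq> dl s3 s4" "dl s1 s2 \<noteq> dl s2 s4" "dl s2 s4 \<noteq> dl s4 s5" "dl s2 s3 \<noteq> dl s3 s5"
    "dl s1 s3 \<noteq> dl s3 s5" "dl s1 s2 \<noteq> dl s2 s5" "dl s1 s4 \<noteq> dl s4 s5"
    using dl_three(1) s by (meson less_trans)+
  show False
    using K5[of ?c "dl s1 s2" "dl s2 s3" "dl s3 s4" "dl s4 s5", OF sym] n r1 r2 r3 r4 r5
    unfolding m35 m24 m13 m25 m14 by simp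
qed

definition bt :: "nat \<Rightarrow> nat \<Rightarrow> bool" where
  "bt a u = odd (a div 2^u)"

lemma side: assumes "a \<noteq> b" shows "b < a \<longleftrightarrow> bt a (dl a b)"
proof -
  let ?u = "dl a b"
  have ne: "a div 2^?u \<noteq> b div 2^?u" using dl_neq[OF assms] .
  have eq1: "a div 2^Suc ?u = b div 2^Suc ?u" using dl_eq_iff[OF assms, of "Suc ?u"] by blast
  have d: "a div 2^Suc ?u = (a div 2^?u) div 2" "b div 2^Suc ?u = (b div 2^?u) div 2"
    by (simp_all only: power_Suc2 div_mult2_eq)
  have key: "\<And>x y::nat. x < y \<Longrightarrow> x div 2 = y div 2 \<Longrightarrow> odd y \<and> even x" by presburger
  show ?thesis
  proof
    assume "b < a"
    hence "b div 2^?u < a div 2^?u" using dl_less_div[of b a] dl_sym[of b a] by simp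
    thus "bt a ?u" unfolding bt_def using key eq1 d by metis
  next
    assume h: "bt a ?u"
    show "b < a"
    proof (rule ccontr)
      assume "\<not> b < a"
      hence "a < b" using assms by simp
      hence "a div 2^?u < b div 2^?u" using dl_less_div by simp
      hence "even (a div 2^?u)" using key eq1 d by metis
      thus False using h unfolding bt_def by simp
    qed
  qed
qed

definition Dset :: "nat set \<Rightarrow> nat \<Rightarrow> nat set" where
  "Dset I a = (\<lambda>b. dl a b) ` (I - {a})"

lemma Dset_finite: "finite I \<Longrightarrow> finite (Dset I a)"
  unfolding Dset_def by simp

lemma Dset_lt: assumes "I \<subseteq> {0..<2^M}" "a \<in> I" shows "Dset I a \<subseteq> {0..<M}"
proof
  fix x assume "x \<in> Dset I a"
  then obtain b where b: "b \<in> I" "b \<noteq> a" "x = dl a b" unfolding Dset_def by blast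
  have "a < 2^M" "b < 2^M" using assms b by auto
  hence "dl a b < M" using dl_lt_M b(2) by metis
  thus "x \<in> {0..<M}" using b by simp
qed

definition noedge :: "nat \<Rightarrow> (nat set \<Rightarrow> bool) \<Rightarrow> nat set \<Rightarrow> bool" where
  "noedge M \<phi> I \<longleftrightarrow> (\<forall>e\<in>Hg M \<phi>. \<not> e \<subseteq> I)"

lemma edge_of:
  assumes "noedge M \<phi> I" "I \<subseteq> {0..<2^M}" "x1 < x2" "x2 < x3" "x3 < x4"
    "x1 \<in> I" "x2 \<in> I" "x3 \<in> I" "x4 \<in> I"
  shows "\<not> Rl (\<lambda>x y. \<phi> {x,y}) (dl x1 x2) (dl x2 x3) (dl x3 x4)"
proof
  assume "Rl (\<lambda>x y. \<phi> {x,y}) (dl x1 x2) (dl x2 x3) (dl x3 x4)"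
  moreover have "x4 < 2^M" using assms by auto
  ultimately have "{x1,x2,x3,x4} \<in> Hg M \<phi>" unfolding Hg_def using assms(3-5) by blast
  moreover have "{x1,x2,x3,x4} \<subseteq> I" using assms(6-9) by auto
  ultimately show False using assms(1) unfolding noedge_def by blast
qed

lemma realize:
  assumes ne: "noedge M \<phi> I" and IM: "I \<subseteq> {0..<2^M}" and aI: "a \<in> I"
    and D: "u1 \<in> Dset I a" "u2 \<in> Dset I a" "w \<in> Dset I a" and o: "w < u2" "u2 < u1"
  shows "\<not> R3 (\<lambda>x y. \<phi> {x,y}) (bt a u1) (bt a u2) u1 u2 w"
proof -
  let ?c = "\<lambda>x y. \<phi> {x,y}"
  obtain p where p: "p \<in> I" "p \<noteq> a" "dl a p = w" using D(3) unfolding Dset_def by blast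
  obtain q where q: "q \<in> I" "q \<noteq> a" "dl a q = u2" using D(2) unfolding Dset_def by blast
  obtain r where r: "r \<in> I" "r \<noteq> a" "dl a r = u1" using D(1) unfolding Dset_def by blast
  have pq: "dl p q = u2" "(a < q \<longleftrightarrow> p < q)" using dl_closer[of a p q] p q o by auto
  have pr: "dl p r = u1" "(a < r \<longleftrightarrow> p < r)" using dl_closer[of a p r] p r o by auto
  have qr: "dl q r = u1" "(a < r \<longleftrightarrow> q < r)" using dl_closer[of a q r] q r o by auto
  have sq: "q < a \<longleftrightarrow> bt a u2" using side[of a q] q by simp
  have sr: "r < a \<longleftrightarrow> bt a u1" using side[of a r] r by simp
  define x1 where "x1 = min a p"
  define x2 where "x2 = max a p"
  have x12: "x1 < x2" "x1 \<in> I" "x2 \<in> I" "dl x1 x2 = w"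
    using p aI unfolding x1_def x2_def by (auto simp: min_def max_def dl_sym)
  have xq: "dl x2 q = u2" "dl x1 q = u2" "(a < q \<longleftrightarrow> x2 < q)" "(a < q \<longleftrightarrow> x1 < q)"
    using pq q unfolding x1_def x2_def by (auto simp: min_def max_def)
  have xr: "dl x2 r = u1" "dl x1 r = u1" "(a < r \<longleftrightarrow> x2 < r)" "(a < r \<longleftrightarrow> x1 < r)"
    using pr r unfolding x1_def x2_def by (auto simp: min_def max_def)
  have aq: "a \<noteq> q" "a \<noteq> r" using q r by auto
  have dis: "q \<noteq> r" "p \<noteq> q" "p \<noteq> r" using p q r o by auto
  have xd: "x1 \<noteq> q" "x2 \<noteq> q" "x1 \<noteq> r" "x2 \<noteq> r"
    using dis aq unfolding x1_def x2_def by (auto simp: min_def max_def)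
  have A1: "bt a u1 \<Longrightarrow> r < x1 \<and> r < x2 \<and> r < q"
  proof -
    assume h: "bt a u1"
    hence "r < a" using sr by simp
    hence "\<not> a < r" by simp
    hence "\<not> x1 < r" "\<not> x2 < r" "\<not> q < r" using xr qr by auto
    thus ?thesis using xd dis by auto
  qed
  have A2: "\<not> bt a u1 \<Longrightarrow> x1 < r \<and> x2 < r \<and> q < r"
  proof -
    assume h: "\<not> bt a u1"
    hence "\<not> r < a" using sr by simp
    hence "a < r" using aq by simp
    thus ?thesis using xr qr by auto
  qed
  have A3: "bt a u2 \<Longrightarrow> q < x1 \<and> q < x2"
  proof -
    assume h: "bt a u2"
    hence "q < a" using sq by simp
    hence "\<not> a < q" by simp
    hence "\<not> x1 < q" "\<not> x2 < q" using xq by auto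
    thus ?thesis using xd by auto
  qed
  have A4: "\<not> bt a u2 \<Longrightarrow> x1 < q \<and> x2 < q"
  proof -
    assume h: "\<not> bt a u2"
    hence "\<not> q < a" using sq by simp
    hence "a < q" using aq by simp
    thus ?thesis using xq by auto
  qed
  consider (LL) "\<not> bt a u1" "\<not> bt a u2" | (RR) "bt a u1" "bt a u2"
    | (LR) "\<not> bt a u1" "bt a u2" | (RL) "bt a u1" "\<not> bt a u2" by blast
  thus ?thesis
  proof cases
    case LL
    have o1: "x2 < q" "q < r" using A1 A2 A3 A4 LL by auto
    have "\<not> Rl ?c (dl x1 x2) (dl x2 q) (dl q r)"
      by (rule edge_of[OF ne IM x12(1) o1]) (use x12 q r in auto)
    thus ?thesis using LL x12 xq qr unfolding R3_def by simp
  next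
    case RR
    have o1: "r < q" "q < x1" using A1 A2 A3 A4 RR by auto
    have "\<not> Rl ?c (dl r q) (dl q x1) (dl x1 x2)"
      by (rule edge_of[OF ne IM o1 x12(1)]) (use x12 q r in auto)
    thus ?thesis using RR x12 xq qr unfolding R3_def by (simp add: dl_sym)
  next
    case LR
    have o1: "q < x1" "x2 < r" using A1 A2 A3 A4 LR by auto
    have "\<not> Rl ?c (dl q x1) (dl x1 x2) (dl x2 r)"
      by (rule edge_of[OF ne IM o1(1) x12(1) o1(2)]) (use x12 q r in auto)
    thus ?thesis using LR x12 xq xr unfolding R3_def by (simp add: dl_sym)
  next
    case RL
    have o1: "r < x1" "x2 < q" using A1 A2 A3 A4 RL by auto
    have "\<not> Rl ?c (dl r x1) (dl x1 x2) (dl x2 q)"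
      by (rule edge_of[OF ne IM o1(1) x12(1) o1(2)]) (use x12 q r in auto)
    thus ?thesis using RL x12 xq xr unfolding R3_def by (simp add: dl_sym)
  qed
qed

definition Hyp :: "nat \<Rightarrow> nat \<Rightarrow> (nat set \<Rightarrow> bool) \<Rightarrow> bool" where
  "Hyp n M \<phi> \<longleftrightarrow> (\<forall>S. S \<subseteq> {0..<M} \<and> card S = n \<longrightarrow>
           (\<exists>x\<in>S. \<exists>y\<in>S. \<exists>z\<in>S. x < y \<and> y < z \<and>
              \<phi> {x, y} = \<phi> {y, z} \<and> \<phi> {x, y} \<noteq> \<phi> {x, z}))"

lemma Lbound:
  assumes hyp: "Hyp n M \<phi>" and ne: "noedge M \<phi> I" and IM: "I \<subseteq> {0..<2^M}" and aI: "a \<in> I"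
    and B: "B = {u \<in> Dset I a. bt a u = t}"
  shows "card B < n"
proof (rule ccontr)
  assume "\<not> card B < n"
  then obtain T where T: "T \<subseteq> B" "card T = n" by (meson not_less obtain_subset_with_card_n)
  have "T \<subseteq> {0..<M}" using T(1) Dset_lt[OF IM aI] B by blast
  then obtain x y z where xyz: "x \<in> T" "y \<in> T" "z \<in> T" "x < y" "y < z"
    "\<phi> {x, y} = \<phi> {y, z}" "\<phi> {x, y} \<noteq> \<phi> {x, z}"
    using hyp T(2) unfolding Hyp_def by blast
  have inD: "x \<in> Dset I a" "y \<in> Dset I a" "z \<in> Dset I a" and bits: "bt a z = t" "bt a y = t"
    using xyz T(1) B by auto
  have "\<not> R3 (\<lambda>x y. \<phi> {x,y}) (bt a z) (bt a y) z y x"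
    using realize[OF ne IM aI inD(3) inD(2) inD(1) xyz(4) xyz(5)] .
  moreover have "\<phi> {z, y} = \<phi> {y, z}" "\<phi> {y, x} = \<phi> {x, y}" "\<phi> {z, x} = \<phi> {x, z}"
    by (simp_all add: insert_commute)
  ultimately show False using bits xyz unfolding R3_def Rl_def by (cases t) auto
qed

lemma Dcard:
  assumes hyp: "Hyp n M \<phi>" and ne: "noedge M \<phi> I" and IM: "I \<subseteq> {0..<2^M}" and aI: "a \<in> I"
  shows "card (Dset I a) \<le> 2 * n - 2"
proof -
  have f: "finite (Dset I a)" using Dset_lt[OF IM aI] finite_subset by blast
  have "Dset I a = {u \<in> Dset I a. bt a u = True} \<union> {u \<in> Dset I a. bt a u = False}" by auto
  hence "card (Dset I a) \<le> card {u \<in> Dset I a. bt a u = True} + card {u \<in> Dset I a. bt a u = False}"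
    by (metis card_Un_le)
  moreover have "card {u \<in> Dset I a. bt a u = True} < n" "card {u \<in> Dset I a. bt a u = False} < n"
    using Lbound[OF hyp ne IM aI] by blast+
  ultimately show ?thesis by linarith
qed

lemma noalt:
  assumes ne: "noedge M \<phi> I" and IM: "I \<subseteq> {0..<2^M}" and aI: "a \<in> I"
    and D: "v0 \<in> Dset I a" "v1 \<in> Dset I a" "v2 \<in> Dset I a" "v3 \<in> Dset I a" "v4 \<in> Dset I a"
           "v5 \<in> Dset I a" "v6 \<in> Dset I a"
    and o: "v1 < v0" "v2 < v1" "v3 < v2" "v4 < v3" "v5 < v4" "v6 < v5"
    and b: "bt a v1 = (\<not> bt a v0)" "bt a v2 = (\<not> bt a v1)" "bt a v3 = (\<not> bt a v2)"
           "bt a v4 = (\<not> bt a v3)" "bt a v5 = (\<not> bt a v4)"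
  shows False
proof -
  let ?c = "\<lambda>x y. \<phi> {x,y}"
  have sym: "\<And>x y. ?c x y = ?c y x" by (simp add: insert_commute)
  have R: "\<And>u1 u2 w. u1 \<in> Dset I a \<Longrightarrow> u2 \<in> Dset I a \<Longrightarrow> w \<in> Dset I a \<Longrightarrow> w < u2 \<Longrightarrow> u2 < u1
     \<Longrightarrow> \<not> R3 ?c (bt a u1) (bt a u2) u1 u2 w"
    using realize[OF ne IM aI] by blast
  have h012: "\<not> R3 ?c (bt a v0) (bt a v1) v0 v1 v2" by (rule R) (use D o in linarith)+
  have h013: "\<not> R3 ?c (bt a v0) (bt a v1) v0 v1 v3" by (rule R) (use D o in linarith)+
  have h014: "\<not> R3 ?c (bt a v0) (bt a v1) v0 v1 v4" by (rule R) (use D o in linarith)+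
  have h015: "\<not> R3 ?c (bt a v0) (bt a v1) v0 v1 v5" by (rule R) (use D o in linarith)+
  have h016: "\<not> R3 ?c (bt a v0) (bt a v1) v0 v1 v6" by (rule R) (use D o in linarith)+
  have h023: "\<not> R3 ?c (bt a v0) (bt a v2) v0 v2 v3" by (rule R) (use D o in linarith)+
  have h024: "\<not> R3 ?c (bt a v0) (bt a v2) v0 v2 v4" by (rule R) (use D o in linarith)+
  have h025: "\<not> R3 ?c (bt a v0) (bt a v2) v0 v2 v5" by (rule R) (use D o in linarith)+
  have h026: "\<not> R3 ?c (bt a v0) (bt a v2) v0 v2 v6" by (rule R) (use D o in linarith)+
  have h034: "\<not> R3 ?c (bt a v0) (bt a v3) v0 v3 v4" by (rule R) (use D o in linarith)+
  have h035: "\<not> R3 ?c (bt a v0) (bt a v3) v0 v3 v5" by (rule R) (use D o in linarith)+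
  have h036: "\<not> R3 ?c (bt a v0) (bt a v3) v0 v3 v6" by (rule R) (use D o in linarith)+
  have h045: "\<not> R3 ?c (bt a v0) (bt a v4) v0 v4 v5" by (rule R) (use D o in linarith)+
  have h046: "\<not> R3 ?c (bt a v0) (bt a v4) v0 v4 v6" by (rule R) (use D o in linarith)+
  have h056: "\<not> R3 ?c (bt a v0) (bt a v5) v0 v5 v6" by (rule R) (use D o in linarith)+
  have h123: "\<not> R3 ?c (bt a v1) (bt a v2) v1 v2 v3" by (rule R) (use D o in linarith)+
  have h124: "\<not> R3 ?c (bt a v1) (bt a v2) v1 v2 v4" by (rule R) (use D o in linarith)+
  have h125: "\<not> R3 ?c (bt a v1) (bt a v2) v1 v2 v5" by (rule R) (use D o in linarith)+
  have h126: "\<not> R3 ?c (bt a v1) (bt a v2) v1 v2 v6" by (rule R) (use D o in linarith)+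
  have h134: "\<not> R3 ?c (bt a v1) (bt a v3) v1 v3 v4" by (rule R) (use D o in linarith)+
  have h135: "\<not> R3 ?c (bt a v1) (bt a v3) v1 v3 v5" by (rule R) (use D o in linarith)+
  have h136: "\<not> R3 ?c (bt a v1) (bt a v3) v1 v3 v6" by (rule R) (use D o in linarith)+
  have h145: "\<not> R3 ?c (bt a v1) (bt a v4) v1 v4 v5" by (rule R) (use D o in linarith)+
  have h146: "\<not> R3 ?c (bt a v1) (bt a v4) v1 v4 v6" by (rule R) (use D o in linarith)+
  have h156: "\<not> R3 ?c (bt a v1) (bt a v5) v1 v5 v6" by (rule R) (use D o in linarith)+
  have h234: "\<not> R3 ?c (bt a v2) (bt a v3) v2 v3 v4" by (rule R) (use D o in linarith)+
  have h235: "\<not> R3 ?c (bt a v2) (bt a v3) v2 v3 v5" by (rule R) (use D o in linarith)+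
  have h236: "\<not> R3 ?c (bt a v2) (bt a v3) v2 v3 v6" by (rule R) (use D o in linarith)+
  have h245: "\<not> R3 ?c (bt a v2) (bt a v4) v2 v4 v5" by (rule R) (use D o in linarith)+
  have h246: "\<not> R3 ?c (bt a v2) (bt a v4) v2 v4 v6" by (rule R) (use D o in linarith)+
  have h256: "\<not> R3 ?c (bt a v2) (bt a v5) v2 v5 v6" by (rule R) (use D o in linarith)+
  have h345: "\<not> R3 ?c (bt a v3) (bt a v4) v3 v4 v5" by (rule R) (use D o in linarith)+
  have h346: "\<not> R3 ?c (bt a v3) (bt a v4) v3 v4 v6" by (rule R) (use D o in linarith)+
  have h356: "\<not> R3 ?c (bt a v3) (bt a v5) v3 v5 v6" by (rule R) (use D o in linarith)+
  have h456: "\<not> R3 ?c (bt a v4) (bt a v5) v4 v5 v6" by (rule R) (use D o in linarith)+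
  show False
  proof (cases "bt a v0")
    case True
    hence bb: "bt a v0 = True" "bt a v1 = False" "bt a v2 = True" "bt a v3 = False" "bt a v4 = True" "bt a v5 = False" using b by simp_all
    show False using h012 h013 h014 h015 h016 h023 h024 h025 h026 h034 h035 h036 h045 h046 h056 h123 h124 h125 h126 h134 h135 h136 h145 h146 h156 h234 h235 h236 h245 h246 h256 h345 h346 h356 h456 unfolding bb by (rule Alt7T[OF sym o])
  next
    case False
    hence bb: "bt a v0 = False" "bt a v1 = True" "bt a v2 = False" "bt a v3 = True" "bt a v4 = False" "bt a v5 = True" using b by simp_all
    show False using h012 h013 h014 h015 h016 h023 h024 h025 h026 h034 h035 h036 h045 h046 h056 h123 h124 h125 h126 h134 h135 h136 h145 h146 h156 h234 h235 h236 h245 h246 h256 h345 h346 h356 h456 unfolding bb by (rule Alt7F[OF sym o])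
  qed
qed

definition rk :: "nat set \<Rightarrow> nat \<Rightarrow> nat" where
  "rk D u = card {v \<in> D. u < v}"

lemma rk_lt:
  assumes "finite D" "u \<in> D" "u' \<in> D" "u < u'"
  shows "rk D u' < rk D u"
proof -
  have "{v \<in> D. u' < v} \<subset> {v \<in> D. u < v}" using assms by auto
  thus ?thesis unfolding rk_def using assms(1) by (simp add: psubset_card_mono)
qed

lemma rk_inj: "finite D \<Longrightarrow> inj_on (rk D) D"
  unfolding inj_on_def by (metis linorder_neqE_nat rk_lt less_irrefl)

lemma rk_range:
  assumes "finite D" "u \<in> D" shows "rk D u < card D"
proof -
  have "{v \<in> D. u < v} \<subset> D" using assms by auto
  thus ?thesis unfolding rk_def using assms(1) by (simp add: psubset_card_mono)
qed

lemma rk_bij: assumes "finite D" shows "bij_betw (rk D) D {0..<card D}"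
proof -
  have i: "inj_on (rk D) D" using rk_inj[OF assms] .
  have s: "rk D ` D \<subseteq> {0..<card D}" using rk_range[OF assms] by auto
  have "card (rk D ` D) = card {0..<card D}" using card_image[OF i] by simp
  hence "rk D ` D = {0..<card D}" using s by (simp add: card_subset_eq)
  thus ?thesis using i unfolding bij_betw_def by simp
qed

lemma upper_eq:
  assumes "a \<in> I" "a' \<in> I" "a \<noteq> a'"
  shows "{v \<in> Dset I a. dl a a' < v} = {v \<in> Dset I a'. dl a a' < v}"
proof -
  have *: "{v \<in> Dset I x. dl x y < v} \<subseteq> {v \<in> Dset I y. dl x y < v}"
    if "x \<in> I" "y \<in> I" "x \<noteq> y" for x y
  proof
    fix v assume "v \<in> {v \<in> Dset I x. dl x y < v}"
    then obtain b where b: "b \<in> I" "b \<noteq> x" "v = dl x b" "dl x y < v" unfolding Dset_def by blast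
    have "dl y b = dl x b" using dl_closer(1)[of x y b] b that by simp
    moreover have "b \<noteq> y" using b by auto
    ultimately have "v \<in> Dset I y" using b unfolding Dset_def by (metis DiffI image_eqI singletonD)
    thus "v \<in> {v \<in> Dset I y. dl x y < v}" using b by simp
  qed
  show ?thesis using *[OF assms] *[OF assms(2,1)] assms(3) by (auto simp: dl_sym)
qed

definition Zs :: "nat set \<Rightarrow> nat \<Rightarrow> nat set" where
  "Zs I a = rk (Dset I a) ` {u \<in> Dset I a. bt a u}"

lemma code_inj:
  assumes fin: "finite I" and "a \<in> I" "a' \<in> I" and eq: "Zs I a = Zs I a'"
  shows "a = a'"
proof (rule ccontr)
  assume ne: "a \<noteq> a'"
  let ?u = "dl a a'"
  have uD: "?u \<in> Dset I a" "?u \<in> Dset I a'" using assms ne unfolding Dset_def by (auto simp: dl_sym)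
  have fD: "finite (Dset I a)" "finite (Dset I a')" using fin by (simp_all add: Dset_finite)
  have rkeq: "rk (Dset I a) ?u = rk (Dset I a') ?u" unfolding rk_def using upper_eq[OF assms(2,3) ne] by simp
  have s1: "a' < a \<longleftrightarrow> bt a ?u" using side[OF ne] .
  have s2: "a < a' \<longleftrightarrow> bt a' ?u" using side[of a' a] ne by (simp add: dl_sym)
  have **: "\<And>x y. x \<in> I \<Longrightarrow> y \<in> I \<Longrightarrow> x \<noteq> y \<Longrightarrow> Zs I x = Zs I y \<Longrightarrow> bt x (dl x y) \<Longrightarrow>
       rk (Dset I x) (dl x y) = rk (Dset I y) (dl x y) \<Longrightarrow> dl x y \<in> Dset I y \<Longrightarrow> bt y (dl x y)"
  proof -
    fix x y assume h: "x \<in> I" "y \<in> I" "x \<noteq> y" "Zs I x = Zs I y" "bt x (dl x y)"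
      "rk (Dset I x) (dl x y) = rk (Dset I y) (dl x y)" "dl x y \<in> Dset I y"
    have "dl x y \<in> Dset I x" using h unfolding Dset_def by auto
    hence "rk (Dset I x) (dl x y) \<in> Zs I x" using h(5) unfolding Zs_def by auto
    hence "rk (Dset I y) (dl x y) \<in> Zs I y" using h(4,6) by simp
    then obtain u' where u': "u' \<in> Dset I y" "bt y u'" "rk (Dset I y) u' = rk (Dset I y) (dl x y)"
      unfolding Zs_def by auto
    have "u' = dl x y" using rk_inj[of "Dset I y"] fin u' h(7) unfolding inj_on_def by (simp add: Dset_finite)
    thus "bt y (dl x y)" using u' by simp
  qed
  show False
  proof (cases "a' < a")
    case True
    hence "bt a ?u" using s1 by simp
    hence "bt a' ?u" using **[OF assms(2,3) ne eq _ rkeq uD(2)] by simp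
    hence "a < a'" using s2 by simp
    thus False using True by simp
  next
    case False
    hence "a < a'" using ne by simp
    hence b: "bt a' ?u" using s2 by simp
    have "bt a' (dl a' a)" using b by (simp add: dl_sym)
    hence "bt a (dl a' a)" using **[OF assms(3,2) ne[symmetric] eq[symmetric]] rkeq uD(1) by (simp add: dl_sym)
    hence "a' < a" using s1 by (simp add: dl_sym)
    thus False using \<open>a < a'\<close> by simp
  qed
qed

definition CPs :: "nat \<Rightarrow> (nat \<Rightarrow> bool) \<Rightarrow> nat set" where
  "CPs m f = {i. Suc i < m \<and> f i \<noteq> f (Suc i)}"

lemma CPs_sub: "CPs m f \<subseteq> {..<m}"
  unfolding CPs_def by auto

lemma altseq:
  "k \<le> card (CPs (Suc m) f) \<Longrightarrow>
     \<exists>g. (\<forall>j<k. g j < g (Suc j)) \<and> g k = m \<and> (\<forall>j<k. f (g (Suc j)) \<noteq> f (g j))"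
proof (induction m arbitrary: k)
  case 0
  have "CPs (Suc 0) f = {}" unfolding CPs_def by auto
  hence "k = 0" using 0 by simp
  thus ?case by (intro exI[of _ "\<lambda>_. 0"]) simp
next
  case (Suc m)
  show ?case
  proof (cases "f m = f (Suc m)")
    case True
    have "CPs (Suc (Suc m)) f = CPs (Suc m) f" unfolding CPs_def using True by (auto simp: less_Suc_eq)
    then obtain g where g: "\<forall>j<k. g j < g (Suc j)" "g k = m" "\<forall>j<k. f (g (Suc j)) \<noteq> f (g j)"
      using Suc.IH Suc.prems by auto
    define g' where "g' = g(k := Suc m)"
    have "\<forall>j<k. g' j < g' (Suc j)"
    proof (intro allI impI)
      fix j assume "j < k"
      hence lt: "g j < g (Suc j)" using g(1) by blast
      show "g' j < g' (Suc j)"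
      proof (cases "Suc j = k")
        case True thus ?thesis using lt g(2) \<open>j < k\<close> unfolding g'_def by simp
      next
        case False thus ?thesis using lt \<open>j < k\<close> unfolding g'_def by simp
      qed
    qed
    moreover have "\<forall>j<k. f (g' (Suc j)) \<noteq> f (g' j)"
    proof (intro allI impI)
      fix j assume j: "j < k"
      show "f (g' (Suc j)) \<noteq> f (g' j)"
      proof (cases "Suc j = k")
        case True thus ?thesis using g j True \<open>f m = f (Suc m)\<close> unfolding g'_def by auto
      next
        case False thus ?thesis using g j unfolding g'_def by auto
      qed
    qed
    ultimately show ?thesis unfolding g'_def by (intro exI[of _ "g(k := Suc m)"]) auto
  next
    case False
    have cp: "CPs (Suc (Suc m)) f = insert m (CPs (Suc m) f)" unfolding CPs_def using False
      by (auto simp: less_Suc_eq)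
    have "m \<notin> CPs (Suc m) f" unfolding CPs_def by simp
    moreover have "finite (CPs (Suc m) f)" using CPs_sub finite_subset by blast
    ultimately have cc: "card (CPs (Suc (Suc m)) f) = Suc (card (CPs (Suc m) f))" unfolding cp by simp
    show ?thesis
    proof (cases k)
      case 0 thus ?thesis by (intro exI[of _ "\<lambda>_. Suc m"]) simp
    next
      case (Suc k')
      hence "k' \<le> card (CPs (Suc m) f)" using Suc.prems cc by simp
      then obtain g where g: "\<forall>j<k'. g j < g (Suc j)" "g k' = m" "\<forall>j<k'. f (g (Suc j)) \<noteq> f (g j)"
        using Suc.IH by blast
      define g' where "g' = g(k := Suc m)"
      have A: "\<forall>j<k. g' j < g' (Suc j)"
      proof (intro allI impI)
        fix j assume "j < k"
        thus "g' j < g' (Suc j)" using g \<open>k = Suc k'\<close> unfolding g'_def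
          by (cases "j = k'") auto
      qed
      have B: "\<forall>j<k. f (g' (Suc j)) \<noteq> f (g' j)"
      proof (intro allI impI)
        fix j assume "j < k"
        thus "f (g' (Suc j)) \<noteq> f (g' j)" using g \<open>k = Suc k'\<close> False unfolding g'_def
          by (cases "j = k'") auto
      qed
      show ?thesis using A B unfolding g'_def by (intro exI[of _ "g(k := Suc m)"]) auto
    qed
  qed
qed

lemma elem_of_rank: assumes "finite D" "r < card D" shows "\<exists>v\<in>D. rk D v = r"
  using rk_bij[OF assms(1)] assms(2) unfolding bij_betw_def by (metis atLeastLessThan_iff imageE zero_le)

lemma rank_order: assumes "finite D" "v \<in> D" "v' \<in> D" "rk D v < rk D v'" shows "v' < v"
proof (rule ccontr)
  assume "\<not> v' < v"
  hence "v < v' \<or> v = v'" by auto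
  thus False using rk_lt[OF assms(1,2,3)] assms(4) by auto
qed

lemma zs_iff: assumes "finite I" "v \<in> Dset I a" shows "rk (Dset I a) v \<in> Zs I a \<longleftrightarrow> bt a v"
proof
  assume "rk (Dset I a) v \<in> Zs I a"
  then obtain u where u: "u \<in> Dset I a" "bt a u" "rk (Dset I a) u = rk (Dset I a) v" unfolding Zs_def by auto
  have "u = v" using rk_inj[of "Dset I a"] assms u unfolding inj_on_def by (simp add: Dset_finite)
  thus "bt a v" using u by simp
next
  assume "bt a v" thus "rk (Dset I a) v \<in> Zs I a" using assms unfolding Zs_def by auto
qed

lemma cp_bound:
  assumes ne: "noedge M \<phi> I" and IM: "I \<subseteq> {0..<2^M}" and aI: "a \<in> I" and fin: "finite I"
  shows "card (CPs (card (Dset I a) - 1) (\<lambda>i. i \<in> Zs I a)) \<le> 4"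
proof (rule ccontr)
  let ?D = "Dset I a"
  let ?L = "card ?D"
  let ?f = "\<lambda>i. i \<in> Zs I a"
  have fD: "finite ?D" using fin by (simp add: Dset_finite)
  assume "\<not> ?thesis"
  hence c5: "5 \<le> card (CPs (?L - 1) ?f)" by simp
  have "CPs (?L - 1) ?f \<noteq> {}" using c5 by auto
  hence L2: "2 \<le> ?L" unfolding CPs_def by auto
  have eqL: "?L - 1 = Suc (?L - 2)" using L2 by simp
  obtain g where g: "\<forall>j<5. g j < g (Suc j)" "g 5 = ?L - 2" "\<forall>j<5. ?f (g (Suc j)) \<noteq> ?f (g j)"
    using altseq[of 5 "?L - 2" ?f] c5 eqL by auto
  have gl: "g 0 < g 1" "g 1 < g 2" "g 2 < g 3" "g 3 < g 4" "g 4 < g 5"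
    using g(1) by (auto simp: numeral_eq_Suc)
  have ga: "?f (g 1) \<noteq> ?f (g 0)" "?f (g 2) \<noteq> ?f (g 1)" "?f (g 3) \<noteq> ?f (g 2)"
    "?f (g 4) \<noteq> ?f (g 3)" "?f (g 5) \<noteq> ?f (g 4)"
    using g(3) by (auto simp: numeral_eq_Suc)
  have gL: "g 0 < ?L" "g 1 < ?L" "g 2 < ?L" "g 3 < ?L" "g 4 < ?L" "g 5 < ?L" "?L - 1 < ?L"
    using gl g(2) L2 by linarith+
  obtain v0 where v0: "v0 \<in> ?D" "rk ?D v0 = g 0" using elem_of_rank[OF fD gL(1)] by blast
  obtain v1 where v1: "v1 \<in> ?D" "rk ?D v1 = g 1" using elem_of_rank[OF fD gL(2)] by blast
  obtain v2 where v2: "v2 \<in> ?D" "rk ?D v2 = g 2" using elem_of_rank[OF fD gL(3)] by blast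
  obtain v3 where v3: "v3 \<in> ?D" "rk ?D v3 = g 3" using elem_of_rank[OF fD gL(4)] by blast
  obtain v4 where v4: "v4 \<in> ?D" "rk ?D v4 = g 4" using elem_of_rank[OF fD gL(5)] by blast
  obtain v5 where v5: "v5 \<in> ?D" "rk ?D v5 = g 5" using elem_of_rank[OF fD gL(6)] by blast
  obtain v6 where v6: "v6 \<in> ?D" "rk ?D v6 = ?L - 1" using elem_of_rank[OF fD gL(7)] by blast
  have o: "v1 < v0" "v2 < v1" "v3 < v2" "v4 < v3" "v5 < v4" "v6 < v5"
    using rank_order[OF fD] v0 v1 v2 v3 v4 v5 v6 gl g(2) L2 by (metis diff_less_mono2 lessI zero_less_numeral eqL)+
  have bz: "bt a v0 = ?f (g 0)" "bt a v1 = ?f (g 1)" "bt a v2 = ?f (g 2)" "bt a v3 = ?f (g 3)"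
    "bt a v4 = ?f (g 4)" "bt a v5 = ?f (g 5)"
    using zs_iff[OF fin] v0 v1 v2 v3 v4 v5 by metis+
  have b: "bt a v1 = (\<not> bt a v0)" "bt a v2 = (\<not> bt a v1)" "bt a v3 = (\<not> bt a v2)"
    "bt a v4 = (\<not> bt a v3)" "bt a v5 = (\<not> bt a v4)"
    using ga unfolding bz by blast+
  show False using noalt[OF ne IM aI v0(1) v1(1) v2(1) v3(1) v4(1) v5(1) v6(1) o b] .
qed

definition Wset :: "nat \<Rightarrow> (nat \<times> nat set) set" where
  "Wset n = {(L, Z). L \<le> 2 * n - 2 \<and> Z \<subseteq> {0..<L} \<and> card (CPs (L - 1) (\<lambda>i. i \<in> Z)) \<le> 4}"

definition enc :: "nat \<times> nat set \<Rightarrow> bool \<times> bool \<times> nat set" where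
  "enc p = (0 \<in> snd p, (fst p - 1) \<in> snd p, insert (fst p) (CPs (fst p - 1) (\<lambda>i. i \<in> snd p)))"

lemma Z_determined:
  assumes "Z \<subseteq> {0..<L}" "Z' \<subseteq> {0..<L}" "0 \<in> Z \<longleftrightarrow> 0 \<in> Z'" "(L - 1) \<in> Z \<longleftrightarrow> (L - 1) \<in> Z'"
    "CPs (L - 1) (\<lambda>i. i \<in> Z) = CPs (L - 1) (\<lambda>i. i \<in> Z')"
  shows "Z = Z'"
proof -
  have "\<forall>i. i < L \<longrightarrow> (i \<in> Z \<longleftrightarrow> i \<in> Z')"
  proof
    fix i show "i < L \<longrightarrow> (i \<in> Z \<longleftrightarrow> i \<in> Z')"
    proof (induction i)
      case 0 thus ?case using assms(3) by simp
    next
      case (Suc i)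
      show ?case
      proof
        assume h: "Suc i < L"
        show "Suc i \<in> Z \<longleftrightarrow> Suc i \<in> Z'"
        proof (cases "Suc i = L - 1")
          case True thus ?thesis using assms(4) by simp
        next
          case False
          hence si: "Suc i < L - 1" using h by simp
          have "i \<in> CPs (L - 1) (\<lambda>i. i \<in> Z) \<longleftrightarrow> i \<in> CPs (L - 1) (\<lambda>i. i \<in> Z')" using assms(5) by simp
          hence "((i \<in> Z) \<noteq> (Suc i \<in> Z)) \<longleftrightarrow> ((i \<in> Z') \<noteq> (Suc i \<in> Z'))" using si unfolding CPs_def by simp
          moreover have "i \<in> Z \<longleftrightarrow> i \<in> Z'" using Suc.IH h by simp
          ultimately show ?thesis by blast
        qed
      qed
    qed
  qed
  thus ?thesis using assms(1,2) by auto
qed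

lemma enc_inj: "inj_on enc (Wset n)"
proof (rule inj_onI)
  fix p q assume p: "p \<in> Wset n" and q: "q \<in> Wset n" and e: "enc p = enc q"
  obtain L Z where pz: "p = (L, Z)" by (cases p)
  obtain L' Z' where qz: "q = (L', Z')" by (cases q)
  let ?C = "CPs (L - 1) (\<lambda>i. i \<in> Z)"
  let ?C' = "CPs (L' - 1) (\<lambda>i. i \<in> Z')"
  have e1: "0 \<in> Z \<longleftrightarrow> 0 \<in> Z'" "(L - 1) \<in> Z \<longleftrightarrow> (L' - 1) \<in> Z'" "insert L ?C = insert L' ?C'"
    using e unfolding enc_def pz qz by auto
  have c1: "?C \<subseteq> {..<L}" "?C' \<subseteq> {..<L'}" using CPs_sub[of "L - 1"] CPs_sub[of "L' - 1"] by fastforce+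
  have "L' \<in> insert L ?C" "L \<in> insert L' ?C'" using e1(3) by blast+
  hence "L' \<le> L" "L \<le> L'" using c1 by auto
  hence LL: "L = L'" by simp
  have "L \<notin> ?C" "L \<notin> ?C'" using c1 LL by auto
  hence CC: "?C = ?C'" using e1(3) LL by (metis insert_ident)
  have "Z = Z'" using Z_determined[of Z L Z'] p q e1 CC LL unfolding pz qz Wset_def by auto
  thus "p = q" using LL pz qz by simp
qed

lemma card_small_sets:
  "card {S. S \<subseteq> {0..<m} \<and> card S \<le> k} \<le> (\<Sum>j\<le>k. m choose j)"
proof -
  have "{S. S \<subseteq> {0..<m} \<and> card S \<le> k} = (\<Union>j\<le>k. nsets {0..<m} j)"
    unfolding nsets_def by (auto intro: finite_subset)
  moreover have "card (\<Union>j\<le>k. nsets {0..<m} j) \<le> (\<Sum>j\<le>k. card (nsets {0..<m} j))"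
    by (rule card_UN_le) simp
  ultimately have "card {S. S \<subseteq> {0..<m} \<and> card S \<le> k} \<le> (\<Sum>j\<le>k. card (nsets {0..<m} j))"
    by simp
  thus ?thesis by simp
qed

lemma numeric:
  assumes "n \<ge> (5::nat)"
  shows "4 * (\<Sum>j\<le>5. (2*n) choose j) \<le> 64 * n^5"
proof -
  let ?m = "2*n"
  have b: "\<And>j. (?m choose j) \<le> ?m^j" using binomial_le_pow by (metis binomial_fact_pow dual_order.trans fact_ge_1 mult_le_mono2 mult.right_neutral)
  have b5: "(?m choose 5) * 120 \<le> ?m^5" using binomial_fact_pow[of ?m 5] by (simp add: fact_numeral)
  have s: "(\<Sum>j\<le>5. ?m choose j) = (?m choose 0) + (?m choose 1) + (?m choose 2) + (?m choose 3) + (?m choose 4) + (?m choose 5)"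
    by (simp add: numeral_eq_Suc)
  have p: "?m^0 = 1" "?m^1 = 2*n" "?m^2 = 4*n^2" "?m^3 = 8*n^3" "?m^4 = 16*n^4" "?m^5 = 32*n^5"
    by (simp_all add: power_mult_distrib)
  have n4: "5 * n^4 \<le> n^5"
  proof -
    have "n^5 = n * n^4" by (simp add: eval_nat_numeral)
    thus ?thesis using assms mult_le_mono1 by metis
  qed
  have n3: "5 * n^3 \<le> n^4"
  proof -
    have "n^4 = n * n^3" by (simp add: eval_nat_numeral)
    thus ?thesis using assms mult_le_mono1 by metis
  qed
  have n2: "5 * n^2 \<le> n^3"
  proof -
    have "n^3 = n * n^2" by (simp add: eval_nat_numeral)
    thus ?thesis using assms mult_le_mono1 by metis
  qed
  have n1: "5 * n \<le> n^2" using assms by (simp add: power2_eq_square)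
  have n0: "5 \<le> n" using assms .
  have s1: "(?m choose 0) + (?m choose 1) + (?m choose 2) + (?m choose 3) + (?m choose 4)
      \<le> 1 + 2*n + 4*n^2 + 8*n^3 + 16*n^4"
    using b[of 0] b[of 1] b[of 2] b[of 3] b[of 4] p by linarith
  have s2: "(?m choose 5) * 120 \<le> 32 * n^5" using b5 p by simp
  have s3: "1 + 2*n + 4*n^2 + 8*n^3 + 16*n^4 \<le> 4 * n^5" using n4 n3 n2 n1 n0 by linarith
  have aux: "\<And>A B c N::nat. A \<le> B \<Longrightarrow> c * 120 \<le> 32 * N \<Longrightarrow> B \<le> 4 * N \<Longrightarrow> 4 * (A + c) \<le> 64 * N"
    unfolding distrib_left by linarith
  show ?thesis unfolding s using aux[OF s1 s2 s3] by (simp add: add.assoc)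
qed

lemma card_Wset: assumes "n \<ge> 5" shows "card (Wset n) \<le> 64 * n^5"
proof -
  let ?F = "{S. S \<subseteq> {0..<2*n} \<and> card S \<le> 5}"
  have finF: "finite ?F" by (rule finite_subset[of _ "Pow {0..<2*n}"]) auto
  have sub: "enc ` Wset n \<subseteq> UNIV \<times> UNIV \<times> ?F"
  proof
    fix x assume "x \<in> enc ` Wset n"
    then obtain L Z where LZ: "(L, Z) \<in> Wset n" "x = enc (L, Z)" by auto
    let ?C = "CPs (L - 1) (\<lambda>i. i \<in> Z)"
    have w: "L \<le> 2 * n - 2" "card ?C \<le> 4" using LZ(1) unfolding Wset_def by auto
    have c: "?C \<subseteq> {..<L}" using CPs_sub[of "L - 1"] by fastforce
    have fc: "finite ?C" using c finite_subset by blast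
    have "insert L ?C \<subseteq> {0..<2*n}" using c w(1) assms by auto
    moreover have "card (insert L ?C) \<le> 5" using w(2) fc card_insert_le_m1 by (simp add: card_insert_if)
    ultimately show "x \<in> UNIV \<times> UNIV \<times> ?F" using LZ(2) unfolding enc_def by auto
  qed
  have fB: "finite ((UNIV::bool set) \<times> (UNIV::bool set) \<times> ?F)" using finF by simp
  have "card (Wset n) \<le> card ((UNIV::bool set) \<times> (UNIV::bool set) \<times> ?F)"
    using card_inj_on_le[OF enc_inj sub fB] .
  also have "\<dots> = 4 * card ?F" by (simp add: card_cartesian_product)
  also have "\<dots> \<le> 4 * (\<Sum>j\<le>5. (2*n) choose j)" using card_small_sets[of "2*n" 5] by simp
  also have "\<dots> \<le> 64 * n^5" using numeric[OF assms] .
  finally show ?thesis .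
qed

lemma no_indep:
  assumes hyp: "Hyp n M \<phi>" and n5: "n \<ge> 5"
  shows "\<not> has_indep (2^6 * n^5 + 1) (2^M) (Hg M \<phi>)"
proof
  assume "has_indep (2^6 * n^5 + 1) (2^M) (Hg M \<phi>)"
  then obtain I where I: "I \<subseteq> {0..<2^M}" "card I = 2^6 * n^5 + 1" "\<forall>e\<in>Hg M \<phi>. \<not> e \<subseteq> I"
    unfolding has_indep_def by blast
  have ne: "noedge M \<phi> I" using I(3) unfolding noedge_def .
  have fin: "finite I" using I(1) finite_subset by blast
  let ?h = "\<lambda>a. (card (Dset I a), Zs I a)"
  have inj: "inj_on ?h I" using code_inj[OF fin] unfolding inj_on_def by auto
  have sub: "?h ` I \<subseteq> Wset n"
  proof
    fix x assume "x \<in> ?h ` I"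
    then obtain a where a: "a \<in> I" "x = ?h a" by auto
    have fD: "finite (Dset I a)" using fin by (simp add: Dset_finite)
    have "card (Dset I a) \<le> 2 * n - 2" using Dcard[OF hyp ne I(1) a(1)] .
    moreover have "Zs I a \<subseteq> {0..<card (Dset I a)}" unfolding Zs_def using rk_range[OF fD] by auto
    moreover have "card (CPs (card (Dset I a) - 1) (\<lambda>i. i \<in> Zs I a)) \<le> 4"
      using cp_bound[OF ne I(1) a(1) fin] .
    ultimately show "x \<in> Wset n" using a(2) unfolding Wset_def by auto
  qed
  have finW: "finite (Wset n)"
    by (rule finite_subset[of _ "{0..2*n} \<times> Pow {0..<2*n}"]) (auto simp: Wset_def)
  have "card I \<le> card (Wset n)" using card_inj_on_le[OF inj sub finW] .
  also have "\<dots> \<le> 64 * n^5" using card_Wset[OF n5] .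
  finally show False using I(2) by simp
qed

lemma ramsey_exists: "\<exists>N. \<forall>H. uniform_hypergraph 4 N H \<longrightarrow> has_clique 4 5 N H \<or> has_indep m N H"
proof -
  obtain N :: nat where N: "partn_lst {..<N} [5, m] 4" using ramsey_full[of "[5, m]" 4] by blast
  have "\<forall>H. uniform_hypergraph 4 N H \<longrightarrow> has_clique 4 5 N H \<or> has_indep m N H"
  proof (intro allI impI)
    fix H assume U: "uniform_hypergraph 4 N H"
    define f where "f = (\<lambda>e. if e \<in> H then 0 else (1::nat))"
    have "f \<in> nsets {..<N} 4 \<rightarrow> {..<length [5, m]}" unfolding f_def by auto
    hence "\<exists>i < length [5, m]. monochromatic {..<N} ([5, m] ! i) 4 f i"
      using N unfolding partn_lst_def by blast
    then obtain i where i: "i < length [5, m]" "monochromatic {..<N} ([5, m] ! i) 4 f i" by blast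
    then obtain X where X: "X \<in> nsets {..<N} ([5, m] ! i)" "f ` nsets X 4 \<subseteq> {i}"
      unfolding monochromatic_def by blast
    show "has_clique 4 5 N H \<or> has_indep m N H"
    proof (cases "i = 0")
      case True
      hence X5: "X \<subseteq> {0..<N}" "card X = 5" "finite X" using X(1) unfolding nsets_def by auto
      have "{e. e \<subseteq> X \<and> card e = 4} \<subseteq> H"
      proof
        fix e assume e: "e \<in> {e. e \<subseteq> X \<and> card e = 4}"
        hence "e \<in> nsets X 4" unfolding nsets_def using X5(3) finite_subset by auto
        hence "f e = 0" using X(2) True by auto
        thus "e \<in> H" unfolding f_def by (auto split: if_splits)
      qed
      thus ?thesis unfolding has_clique_def using X5 by blast
    next
      case False
      hence i1: "i = 1" using i(1) by (simp add: less_Suc_eq)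
      hence Xm: "X \<subseteq> {0..<N}" "card X = m" "finite X" using X(1) unfolding nsets_def by auto
      have "\<forall>e\<in>H. \<not> e \<subseteq> X"
      proof (intro ballI notI)
        fix e assume e: "e \<in> H" "e \<subseteq> X"
        have "card e = 4" using U e(1) unfolding uniform_hypergraph_def by blast
        hence "e \<in> nsets X 4" unfolding nsets_def using e(2) Xm(3) finite_subset by auto
        hence "f e = 1" using X(2) i1 by auto
        thus False using e(1) unfolding f_def by simp
      qed
      thus ?thesis unfolding has_indep_def using Xm by blast
    qed
  qed
  thus ?thesis by blast
qed

lemma not_P_small:
  assumes hyp: "Hyp n M \<phi>" and n5: "n \<ge> 5" and NM: "N \<le> 2^M"
  shows "\<not> (\<forall>H. uniform_hypergraph 4 N H \<longrightarrow> has_clique 4 5 N H \<or> has_indep (2^6 * n^5 + 1) N H)"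
proof
  assume P: "\<forall>H. uniform_hypergraph 4 N H \<longrightarrow> has_clique 4 5 N H \<or> has_indep (2^6 * n^5 + 1) N H"
  let ?H = "{e \<in> Hg M \<phi>. e \<subseteq> {0..<N}}"
  have U: "uniform_hypergraph 4 N ?H" using Hg_uniform[of M \<phi>] unfolding uniform_hypergraph_def by auto
  have sub: "{0..<N} \<subseteq> {0..<(2::nat)^M}" using NM by auto
  show False
  proof (cases "has_clique 4 5 N ?H")
    case True
    then obtain S where S: "S \<subseteq> {0..<N}" "card S = 5" "{e. e \<subseteq> S \<and> card e = 4} \<subseteq> ?H"
      unfolding has_clique_def by blast
    have "has_clique 4 5 (2^M) (Hg M \<phi>)" unfolding has_clique_def using S sub by blast
    thus False using no_clique by blast
  next
    case False
    hence "has_indep (2^6 * n^5 + 1) N ?H" using P U by blast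
    then obtain I where I: "I \<subseteq> {0..<N}" "card I = 2^6 * n^5 + 1" "\<forall>e\<in>?H. \<not> e \<subseteq> I"
      unfolding has_indep_def by blast
    have "\<forall>e\<in>Hg M \<phi>. \<not> e \<subseteq> I" using I by blast
    hence "has_indep (2^6 * n^5 + 1) (2^M) (Hg M \<phi>)" unfolding has_indep_def using I sub by blast
    thus False using no_indep[OF hyp n5] by blast
  qed
qed

theorem mainTheorem5:
  fixes n M :: nat and \<phi> :: "nat set \<Rightarrow> bool"
  assumes "n \<ge> 5" and "M \<ge> 1"
    and "\<forall>S. S \<subseteq> {0..<M} \<and> card S = n \<longrightarrow>
           (\<exists>x\<in>S. \<exists>y\<in>S. \<exists>z\<in>S. x < y \<and> y < z \<and>
              \<phi> {x, y} = \<phi> {y, z} \<and> \<phi> {x, y} \<noteq> \<phi> {x, z})"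
  shows "hramsey 4 5 (2^6 * n^5 + 1) > 2^M"
proof -
  have hyp: "Hyp n M \<phi>" using assms(3) unfolding Hyp_def by blast
  let ?P = "\<lambda>N. \<forall>H. uniform_hypergraph 4 N H \<longrightarrow> has_clique 4 5 N H \<or> has_indep (2^6 * n^5 + 1) N H"
  have ex: "\<exists>N. ?P N" using ramsey_exists by blast
  have PL: "?P (LEAST N. ?P N)" using LeastI_ex[OF ex] .
  show ?thesis
  proof (rule ccontr)
    assume "\<not> ?thesis"
    hence "(LEAST N. ?P N) \<le> 2^M" unfolding hramsey_def by simp
    thus False using not_P_small[OF hyp assms(1)] PL by blast
  qed
qed

end
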